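(* Let $k$ and $r$ be positive integers such that $r \mid k$ and $k > r$. Then $$S_{\mathfrak{z},2}(k;r) = rk - 2r + 1.$$
   Context: Let $\mathcal{E}$ denote the equation $x_1 + x_2 + \cdots + x_{k-1} = x_k$, whose solutions are taken in positive integers. For positive integers $k, r$ with $r \mid k$, $S_{\mathfrak{z},2}(k;r)$ is defined as the least positive integer $t$ such that for every 2-coloring $\chi : \{1, 2, \ldots, t\} \to \{0,1\}$ there exists a solution $(\hat{x}_1, \ldots, \hat{x}_k)$ of $\mathcal{E}$ with all $\hat{x}_i \in \{1, \ldots, t\}$ satisfying $\sum_{i=1}^k \chi(\hat{x}_i) \equiv 0 \pmod r$. *)

theory Defs
  imports Main
begin

definition is_solution_in :: "nat \<Rightarrow> nat \<Rightarrow> (nat \<Rightarrow> nat) \<Rightarrow> bool" where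
  "is_solution_in k t x \<longleftrightarrow>
     (\<forall>i\<in>{1..k}. x i \<in> {1..t}) \<and> (\<Sum>i=1..k-1. x i) = x k"

definition zs_property :: "nat \<Rightarrow> nat \<Rightarrow> nat \<Rightarrow> bool" where
  "zs_property k r t \<longleftrightarrow>
     (\<forall>\<chi> :: nat \<Rightarrow> nat. (\<forall>n\<in>{1..t}. \<chi> n \<in> {0,1}) \<longrightarrow>
        (\<exists>x. is_solution_in k t x \<and> r dvd (\<Sum>i=1..k. \<chi> (x i))))"

definition S_z2 :: "nat \<Rightarrow> nat \<Rightarrow> nat" where
  "S_z2 k r = (LEAST t. 0 < t \<and> zs_property k r t)"

end

theory Submission
  imports Defs
begin


lemma block_sum_gen:
  "(\<Sum>i=1..m. g (if i \<le> p then a else if i \<le> p+q then b else c)) =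
     min p m * g a + (min (p+q) m - min p m) * g b + (m - min (p+q) m) * (g c :: nat)"
proof (induction m)
  case 0
  then show ?case by simp
next
  case (Suc m)
  have s: "(\<Sum>i=1..Suc m. g (if i \<le> p then a else if i \<le> p+q then b else c)) =
     (\<Sum>i=1..m. g (if i \<le> p then a else if i \<le> p+q then b else c)) +
      g (if Suc m \<le> p then a else if Suc m \<le> p+q then b else c)"
    by (rule sum.cl_ivl_Suc[THEN trans]) simp
  show ?case
  proof (cases "Suc m \<le> p")
    case True
    then show ?thesis unfolding s Suc.IH by (simp add: min_def)
  next
    case F1: False
    show ?thesis
    proof (cases "Suc m \<le> p + q")
      case True
      then have "min p (Suc m) = p" "min p m = p" "min (p+q) m = m" "min (p+q) (Suc m) = Suc m"
        using F1 by auto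
      moreover have "Suc m - p = Suc (m - p)" using F1 by simp
      ultimately show ?thesis unfolding s Suc.IH using F1 True by simp
    next
      case False
      then have "min p (Suc m) = p" "min p m = p" "min (p+q) m = p+q" "min (p+q) (Suc m) = p+q"
        using F1 by auto
      then show ?thesis unfolding s Suc.IH using F1 False
        by (simp add: algebra_simps Suc_diff_le)
    qed
  qed
qed

lemma block_sum:
  assumes "p + q \<le> m"
  shows "(\<Sum>i=1..m. g (if i \<le> p then a else if i \<le> p+q then b else c)) =
     p * g a + q * g b + (m - p - q) * (g c :: nat)"
proof -
  have "min p m = p" "min (p+q) m = p+q" using assms by auto
  then show ?thesis unfolding block_sum_gen by simp
qed




definition blk :: "nat \<Rightarrow> nat \<Rightarrow> nat \<Rightarrow> nat \<Rightarrow> nat \<Rightarrow> nat \<Rightarrow> nat \<Rightarrow> nat" where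
  "blk k p q a b X i = (if i \<le> p then a else if i \<le> p+q then b else if i < k then 1 else X)"

lemma blk_sum1:
  assumes "p + q \<le> k - 1"
  shows "(\<Sum>i=1..k-1. g (blk k p q a b X i)) = p * g a + q * g b + (k-1-p-q) * (g 1 :: nat)"
proof -
  have "(\<Sum>i=1..k-1. g (blk k p q a b X i)) =
        (\<Sum>i=1..k-1. g (if i \<le> p then a else if i \<le> p+q then b else 1))"
    by (rule sum.cong) (auto simp: blk_def)
  also have "\<dots> = p * g a + q * g b + (k-1-p-q) * g 1"
    using assms by (rule block_sum)
  finally show ?thesis .
qed

lemma blk_sum2:
  assumes "p + q \<le> k - 1" "1 \<le> k"
  shows "(\<Sum>i=1..k. g (blk k p q a b X i)) = p * g a + q * g b + (k-1-p-q) * g 1 + (g X :: nat)"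
proof -
  obtain k' where k: "k = Suc k'" using assms(2) by (cases k) auto
  have "(\<Sum>i=1..k. g (blk k p q a b X i)) = (\<Sum>i=1..k-1. g (blk k p q a b X i)) + g (blk k p q a b X k)"
    unfolding k by (rule sum.cl_ivl_Suc[THEN trans]) simp
  moreover have "blk k p q a b X k = X" using assms by (auto simp: blk_def)
  ultimately show ?thesis using blk_sum1[OF assms(1)] by simp
qed

lemma blk_sol:
  assumes "p + q \<le> k - 1" "1 \<le> k" "a \<in> {1..t}" "b \<in> {1..t}" "X \<in> {1..t}" "1 \<le> t"
    "X = p * a + q * b + (k-1-p-q)"
  shows "is_solution_in k t (blk k p q a b X)"
  unfolding is_solution_in_def
proof
  show "\<forall>i\<in>{1..k}. blk k p q a b X i \<in> {1..t}"
    using assms by (auto simp: blk_def)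
  show "(\<Sum>i=1..k-1. blk k p q a b X i) = blk k p q a b X k"
    using blk_sum1[OF assms(1), of id] assms by (simp add: blk_def)
qed




lemma good:
  assumes "p + q \<le> k - 1" "1 \<le> k" "a \<in> {1..t}" "b \<in> {1..t}" "X \<in> {1..t}" "1 \<le> t"
    "X = p * a + q * b + (k-1-p-q)"
    "r dvd (p * \<chi> a + q * \<chi> b + (k-1-p-q) * \<chi> 1 + \<chi> X)"
  shows "\<exists>x. is_solution_in k t x \<and> r dvd (\<Sum>i=1..k. \<chi> (x i))"
  using blk_sol[OF assms(1-7)] blk_sum2[OF assms(1,2), of \<chi>] assms(8) by metis

lemma ub3:
  fixes s j k t v d :: nat
  assumes kdef: "k = (s+3)*(j+2)" and tdef: "t = (s+3)*k - 2*(s+3) + 1"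
    and vd: "(s+3)*d + v = 5" "v \<le> s+2"
    and col: "\<forall>n\<in>{1..t}. \<chi> n \<in> {0,1::nat}" and c1: "\<chi> 1 = 0"
  shows "\<exists>x. is_solution_in k t x \<and> (s+3) dvd (\<Sum>i=1..k. \<chi> (x i))"
proof -
  have kk: "k = s*j + 2*s + 3*j + 6" using kdef by (simp add: algebra_simps)
  have rk: "(s+3)*k = 2*(s+3) + (s*s*j + 2*s*s + 6*s*j + 10*s + 9*j + 12)"
    using kdef by (simp add: algebra_simps)
  have tt: "t = s*s*j + 2*s*s + 6*s*j + 10*s + 9*j + 13" using tdef rk by simp
  have d1: "d \<le> 1"
  proof (rule ccontr)
    assume "\<not> d \<le> 1"
    then have "(s+3)*d \<ge> 3*2" by (intro mult_mono) auto
    then show False using vd(1) by linarith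
  qed
  have vd': "s*d + 3*d + v = 5" using vd(1) by (simp add: algebra_simps)
  define z where "z = s*j + 2*s + 2*j + 3"
  define a where "a = k + s + 1 + v"
  define w where "w = s*j + 2*s + j + d"
  have chi_le: "\<And>n. n \<in> {1..t} \<Longrightarrow> \<chi> n = 0 \<or> \<chi> n = 1" using col by auto
  have t1: "1 \<le> t" using tt by simp
  have k1: "1 \<le> k" using kk by simp
  have km1: "k - 1 = s*j + 2*s + 3*j + 5" using kk by simp
  have in1: "1 \<in> {1..t}" "2 \<in> {1..t}" "3 \<in> {1..t}" using tt by auto
  have ink: "k - 1 \<in> {1..t}" using km1 tt by auto
  have inz: "z \<in> {1..t}" unfolding z_def using tt by auto
  have ina: "a \<in> {1..t}" unfolding a_def using tt kk vd(2) by auto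
  have sd: "1 \<le> 2*s + d"
  proof (cases "s = 0")
    case True then show ?thesis using vd' vd(2) by simp
  qed simp
  have inw: "w \<in> {1..t}" unfolding w_def using tt d1 sd by auto
  have e2: "t = (s+2)*(k-1) + 0*1 + (k-1-(s+2)-0)"
    unfolding km1 tt by (simp add: algebra_simps)
  have e3: "t = 1*3 + (s+3)*z + (k-1-1-(s+3))"
    unfolding km1 tt z_def by (simp add: algebra_simps)
  have e4: "t = 2*2 + (s+3)*z + (k-1-2-(s+3))"
    unfolding km1 tt z_def by (simp add: algebra_simps)
  have e5: "a = (s+2-v)*2 + v*3 + (k-1-(s+2-v)-v)"
  proof -
    have "(s+2-v)*2 + v*3 = 2*s + 4 + v" using vd(2) by (simp add: diff_mult_distrib)
    moreover have "k-1-(s+2-v)-v = k - 3 - s" using vd(2) km1 by simp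
    ultimately show ?thesis unfolding a_def using km1 by simp
  qed
  have e6: "t = 1*a + (s+3)*w + (k-1-1-(s+3))"
  proof -
    have "k-1-1-(s+3) = s*j + s + 3*j + 1" using km1 by simp
    then show ?thesis unfolding tt a_def w_def kk using vd' by (simp add: algebra_simps)
  qed
  have b1: "0 + 0 \<le> k - 1" "s + 2 + 0 \<le> k - 1" "1 + (s+3) \<le> k - 1" "2 + (s+3) \<le> k - 1"
    "(s+2-v) + v \<le> k - 1" using km1 vd(2) by auto
  have dvs: "\<And>y. (s+3) dvd ((s+3)*y)" by simp
  show ?thesis
  proof (cases "\<chi> (k-1) = 0")
    case True
    have "(s+3) dvd (0 * \<chi> 1 + 0 * \<chi> 1 + (k-1-0-0) * \<chi> 1 + \<chi> (k-1))"
      using True c1 by simp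
    then show ?thesis using good[OF b1(1) k1 in1(1) in1(1) ink t1] by simp
  next
    case K1: False
    then have K1': "\<chi> (k-1) = 1" using chi_le[OF ink] by auto
    show ?thesis
    proof (cases "\<chi> t = 1")
      case True
      have "(s+3) dvd ((s+2) * \<chi> (k-1) + 0 * \<chi> 1 + (k-1-(s+2)-0) * \<chi> 1 + \<chi> t)"
      proof -
        have "(s+2) * \<chi> (k-1) + 0 * \<chi> 1 + (k-1-(s+2)-0) * \<chi> 1 + \<chi> t = s+3"
          using True c1 K1' by simp
        then show ?thesis by simp
      qed
      then show ?thesis using good[OF b1(2) k1 ink in1(1) _ t1 e2] t1 by simp
    next
      case T0: False
      then have T0': "\<chi> t = 0" using chi_le[of t] t1 by auto
      show ?thesis
      proof (cases "\<chi> 3 = 0")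
        case True
        have "(s+3) dvd (1 * \<chi> 3 + (s+3) * \<chi> z + (k-1-1-(s+3)) * \<chi> 1 + \<chi> t)"
          using True c1 T0' by simp
        then show ?thesis using good[OF b1(3) k1 in1(3) inz _ t1 e3] t1 by simp
      next
        case C3: False
        then have C3': "\<chi> 3 = 1" using chi_le[OF in1(3)] by auto
        show ?thesis
        proof (cases "\<chi> 2 = 0")
          case True
          have "(s+3) dvd (2 * \<chi> 2 + (s+3) * \<chi> z + (k-1-2-(s+3)) * \<chi> 1 + \<chi> t)"
            using True c1 T0' by simp
          then show ?thesis using good[OF b1(4) k1 in1(2) inz _ t1 e4] t1 by simp
        next
          case C2: False
          then have C2': "\<chi> 2 = 1" using chi_le[OF in1(2)] by auto
          show ?thesis
          proof (cases "\<chi> a = 1")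
            case True
            have "(s+2-v) * \<chi> 2 + v * \<chi> 3 + (k-1-(s+2-v)-v) * \<chi> 1 + \<chi> a = s + 3"
              using True C2' C3' c1 vd(2) by simp
            then have "(s+3) dvd ((s+2-v) * \<chi> 2 + v * \<chi> 3 + (k-1-(s+2-v)-v) * \<chi> 1 + \<chi> a)"
              by simp
            then show ?thesis using good[OF b1(5) k1 in1(2) in1(3) ina t1 e5] by simp
          next
            case A0: False
            then have A0': "\<chi> a = 0" using chi_le[OF ina] by auto
            have "(s+3) dvd (1 * \<chi> a + (s+3) * \<chi> w + (k-1-1-(s+3)) * \<chi> 1 + \<chi> t)"
              using A0' c1 T0' by simp
            then show ?thesis using good[OF b1(3) k1 ina inw _ t1 e6] t1 by simp
          qed
        qed
      qed
    qed
  qed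
qed




lemma ub2:
  fixes j k t :: nat
  assumes kdef: "k = 2*(j+2)" and tdef: "t = 2*k - 2*2 + 1"
    and col: "\<forall>n\<in>{1..t}. \<chi> n \<in> {0,1::nat}" and c1: "\<chi> 1 = 0"
  shows "\<exists>x. is_solution_in k t x \<and> 2 dvd (\<Sum>i=1..k. \<chi> (x i))"
proof -
  have tt: "t = 4*j + 5" using tdef kdef by simp
  have km1: "k - 1 = 2*j+3" using kdef by simp
  have chi_le: "\<And>n. n \<in> {1..t} \<Longrightarrow> \<chi> n = 0 \<or> \<chi> n = 1" using col by auto
  have t1: "1 \<le> t" and k1: "1 \<le> k" using tt kdef by auto
  have in1: "1 \<in> {1..t}" "j+2 \<in> {1..t}" "k-1 \<in> {1..t}" "t \<in> {1..t}" using tt km1 by auto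
  have b: "0 + 0 \<le> k - 1" "1 + 0 \<le> k - 1" "2 + 0 \<le> k - 1" using km1 by auto
  have e2: "t = 1*(k-1) + 0*1 + (k-1-1-0)" using tt km1 by simp
  have e3: "t = 2*(j+2) + 0*1 + (k-1-2-0)" using tt km1 by simp
  show ?thesis
  proof (cases "\<chi> (k-1) = 0")
    case True
    have "2 dvd (0 * \<chi> 1 + 0 * \<chi> 1 + (k-1-0-0) * \<chi> 1 + \<chi> (k-1))"
      using True c1 by simp
    then show ?thesis using good[OF b(1) k1 in1(1) in1(1) in1(3) t1] by simp
  next
    case K1: False
    then have K1': "\<chi> (k-1) = 1" using chi_le[OF in1(3)] by auto
    show ?thesis
    proof (cases "\<chi> t = 1")
      case True
      have "2 dvd (1 * \<chi> (k-1) + 0 * \<chi> 1 + (k-1-1-0) * \<chi> 1 + \<chi> t)"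
        using True c1 K1' by simp
      then show ?thesis using good[OF b(2) k1 in1(3) in1(1) in1(4) t1 e2] by simp
    next
      case False
      then have T0': "\<chi> t = 0" using chi_le[OF in1(4)] by auto
      have "2 dvd (2 * \<chi> (j+2) + 0 * \<chi> 1 + (k-1-2-0) * \<chi> 1 + \<chi> t)"
        using T0' c1 by simp
      then show ?thesis using good[OF b(3) k1 in1(2) in1(1) in1(4) t1 e3] by simp
    qed
  qed
qed

lemma ub1:
  assumes "2 \<le> k" "t = k - 1"
  shows "\<exists>x. is_solution_in k t x \<and> (1::nat) dvd (\<Sum>i=1..k. \<chi> (x i))"
proof -
  have "is_solution_in k t (blk k 0 0 1 1 (k-1))"
    by (rule blk_sol) (use assms in auto)
  then show ?thesis by auto
qed

lemma ub0:
  fixes k r t :: nat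
  assumes "0 < r" "r dvd k" "r < k" "t = r*k - 2*r + 1"
    and col: "\<forall>n\<in>{1..t}. \<chi> n \<in> {0,1::nat}" and c1: "\<chi> 1 = 0"
  shows "\<exists>x. is_solution_in k t x \<and> r dvd (\<Sum>i=1..k. \<chi> (x i))"
proof -
  obtain m where m: "k = r*m" using assms(2) by blast
  have m2: "m \<ge> 2"
  proof (rule ccontr)
    assume "\<not> m \<ge> 2"
    then have "m \<le> 1" by simp
    then have "r*m \<le> r*1" by (intro mult_le_mono2)
    then show False using m assms(3) by simp
  qed
  then obtain j where j: "m = j+2" by (metis add.commute le_Suc_ex)
  consider "r = 1" | "r = 2" | s where "r = s+3"
  proof -
    have "r = 1 \<or> r = 2 \<or> (\<exists>s. r = s+3)" using assms(1) by presburger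
    then show "(r = 1 \<Longrightarrow> thesis) \<Longrightarrow> (r = 2 \<Longrightarrow> thesis) \<Longrightarrow> (\<And>s. r = s + 3 \<Longrightarrow> thesis) \<Longrightarrow> thesis" by blast
  qed
  then show ?thesis
  proof cases
    case 1
    then have "t = k - 1" "2 \<le> k" using assms(3,4) by auto
    then show ?thesis using ub1[of k t \<chi>] 1 by simp
  next
    case 2
    then show ?thesis using ub2[of k j t \<chi>] m j assms(4) col c1 by simp
  next
    case 3
    have vd: "(s+3) * (5 div (s+3)) + 5 mod (s+3) = 5" by simp
    have v: "5 mod (s+3) \<le> s+2"
    proof -
      have "5 mod (s+3) < s+3" by (rule mod_less_divisor) simp
      then show ?thesis by linarith
    qed
    have kd: "k = (s+3)*(j+2)" using m j 3 by simp
    have td: "t = (s+3)*k - 2*(s+3) + 1" using assms(4) 3 by simp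
    show ?thesis using ub3[OF kd td vd v col c1] 3 by simp
  qed
qed

lemma flip_sum:
  assumes "\<forall>i\<in>{1..k}. f i \<le> (1::nat)"
  shows "(\<Sum>i=1..k. 1 - f i) = k - (\<Sum>i=1..k. f i)"
  using sum_subtractf_nat[of "{1..k}" f "\<lambda>_. 1"] assms by simp

lemma ub:
  fixes k r t :: nat
  assumes "0 < r" "r dvd k" "r < k" "t = r*k - 2*r + 1"
  shows "zs_property k r t"
  unfolding zs_property_def
proof (intro allI impI)
  fix \<chi> :: "nat \<Rightarrow> nat"
  assume col: "\<forall>n\<in>{1..t}. \<chi> n \<in> {0,1}"
  have t1: "1 \<le> t" using assms(4) by simp
  show "\<exists>x. is_solution_in k t x \<and> r dvd (\<Sum>i=1..k. \<chi> (x i))"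
  proof (cases "\<chi> 1 = 0")
    case True
    then show ?thesis using ub0[OF assms col] by simp
  next
    case False
    define \<psi> where "\<psi> = (\<lambda>n. 1 - \<chi> n)"
    have col': "\<forall>n\<in>{1..t}. \<psi> n \<in> {0,1}" using col by (auto simp: \<psi>_def)
    have "\<psi> 1 = 0" using False col t1 by (auto simp: \<psi>_def)
    then obtain x where x: "is_solution_in k t x" "r dvd (\<Sum>i=1..k. \<psi> (x i))"
      using ub0[OF assms col'] by blast
    have le: "\<forall>i\<in>{1..k}. \<chi> (x i) \<le> 1"
      using x(1) col unfolding is_solution_in_def by fastforce
    have "(\<Sum>i=1..k. \<psi> (x i)) = k - (\<Sum>i=1..k. \<chi> (x i))"
      unfolding \<psi>_def by (rule flip_sum[OF le])
    moreover have "(\<Sum>i=1..k. \<chi> (x i)) \<le> k"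
    proof -
      have "(\<Sum>i=1..k. \<chi> (x i)) \<le> (\<Sum>i=1..k. (1::nat))" by (rule sum_mono) (use le in auto)
      then show ?thesis by simp
    qed
    ultimately have "r dvd k - (k - (\<Sum>i=1..k. \<chi> (x i)))"
      using x(2) assms(2) by (metis dvd_diff_nat)
    then have "r dvd (\<Sum>i=1..k. \<chi> (x i))"
      using \<open>(\<Sum>i=1..k. \<chi> (x i)) \<le> k\<close> by simp
    then show ?thesis using x(1) by blast
  qed
qed




lemma lb:
  fixes k r t' :: nat
  assumes "0 < r" "r < k" "t' < r*k - 2*r + 1"
  shows "\<not> zs_property k r t'"
proof
  assume zs: "zs_property k r t'"
  define \<chi> where "\<chi> = (\<lambda>n::nat. if k - 1 \<le> n then 1 else (0::nat))"
  have "\<forall>n\<in>{1..t'}. \<chi> n \<in> {0,1}" by (auto simp: \<chi>_def)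
  then obtain x where x: "is_solution_in k t' x" "r dvd (\<Sum>i=1..k. \<chi> (x i))"
    using zs unfolding zs_property_def by blast
  have xr: "\<forall>i\<in>{1..k}. x i \<in> {1..t'}" and xs: "(\<Sum>i=1..k-1. x i) = x k"
    using x(1) unfolding is_solution_in_def by auto
  define J where "J = (\<Sum>i=1..k-1. \<chi> (x i))"
  have k2: "k \<ge> 2" using assms by simp
  have "(\<Sum>i=1..k-1. 1 + (k-2) * \<chi> (x i)) \<le> (\<Sum>i=1..k-1. x i)"
  proof (rule sum_mono)
    fix i assume i: "i \<in> {1..k-1}"
    then have "x i \<ge> 1" using xr by auto
    then show "1 + (k-2) * \<chi> (x i) \<le> x i" using k2 by (auto simp: \<chi>_def)
  qed
  moreover have "(\<Sum>i=1..k-1. 1 + (k-2) * \<chi> (x i)) = (\<Sum>i=1..k-1. (1::nat)) + (k-2) * J"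
    unfolding J_def sum.distrib sum_distrib_left ..
  ultimately have low: "(k-1) + (k-2) * J \<le> x k"
    unfolding xs by simp
  have "x k \<ge> k - 1" using low by simp
  then have ck: "\<chi> (x k) = 1" by (simp add: \<chi>_def)
  obtain k' where k': "k = Suc k'" using k2 by (cases k) auto
  have "(\<Sum>i=1..k. \<chi> (x i)) = J + \<chi> (x k)"
    unfolding J_def k' by (rule sum.cl_ivl_Suc[THEN trans]) simp
  then have "r dvd J + 1" using x(2) ck by simp
  then have "r \<le> J + 1" by (rule dvd_imp_le) simp
  then have "r - 1 \<le> J" by linarith
  then have "(k-2) * (r-1) \<le> (k-2) * J" by (rule mult_le_mono2)
  then have "(k-1) + (k-2)*(r-1) \<le> x k" using low by linarith
  moreover have "(k-1) + (k-2)*(r-1) = r*k - 2*r + 1"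
  proof -
    obtain a b where "k = a + 2" "r = b + 1" using k2 assms(1)
      by (metis add.commute le_Suc_ex Suc_eq_plus1 Suc_pred)
    then show ?thesis by (simp add: algebra_simps)
  qed
  moreover have "x k \<le> t'" using xr k2 by auto
  ultimately show False using assms(3) by linarith
qed

theorem theorem3:
  fixes k r :: nat
  assumes "0 < k" and "0 < r" and "r dvd k" and "k > r"
  shows "S_z2 k r = r * k - 2 * r + 1"
  unfolding S_z2_def
proof (rule Least_equality)
  show "0 < r * k - 2 * r + 1 \<and> zs_property k r (r * k - 2 * r + 1)"
    using ub[OF assms(2,3,4)] by simp
next
  fix y assume "0 < y \<and> zs_property k r y"
  then show "r * k - 2 * r + 1 \<le> y" using lb[OF assms(2,4), of y] by linarith
qed


end
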